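(* In the two-period setting of the context: (i) if $\frac{\hat\ell_n^P}{E_n}+\frac12\ge\frac{\hat\ell^P}{E}$ for all $n$, then for every $\alpha\in[0,1]$ the aggregate peak load at a Nash equilibrium of $\mathcal G^{\mathrm{DP}}_\alpha$ is $\ell^P=\frac E2+\alpha\frac{\hat\ell^P-\hat\ell^O}{2}$; (ii) if $2(N-1)\hat\ell_n^P\ge(\hat\ell^P-\hat\ell^O)-E_n$ for all $n$, then for every $\alpha\in[0,1]$ the aggregate peak load at the Nash equilibrium of $\mathcal G^{\mathrm{HP}}_\alpha$ is $\ell^P=\frac E2+\phi(\alpha)\frac{\hat\ell^P-\hat\ell^O}{2}$, where $\phi(\alpha)=\frac{2\alpha}{(1+\alpha)+(1-\alpha)N}$.
   Context: Two-period setting: users $\mathcal N=\{1,\dots,N\}$, periods $\mathcal H=\{P,O\}$. Each user $n$ has energy demand $E_n>0$ and preferred profile $(\hat\ell_n^P,\hat\ell_n^O)$ with $\hat\ell_n^h\ge0$, $\hat\ell_n^P+\hat\ell_n^O=E_n$; $E=\sum_nE_n$, $\hat\ell^h=\sum_n\hat\ell_n^h$, and $\hat\ell^P\ge\frac E2\ge\hat\ell^O$. Feasible set $\mathcal L_n=\{(\ell_n^P,\ell_n^O):\ell_n^P+\ell_n^O=E_n,\ \ell_n^P,\ell_n^O\ge0\}$; $\ell^h=\sum_n\ell_n^h$. Costs $C_h(x)=x^2$, utilities $u_n(\boldsymbol\ell_n)=-\sum_h(\ell_n^h-\hat\ell_n^h)^2$. DP bill $b_n^{\mathrm{DP}}=\frac{E_n}{E}((\ell^P)^2+(\ell^O)^2)$;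 HP bill $b_n^{\mathrm{HP}}=\sum_h\ell_n^h\ell^h$. In $\mathcal G^{\mathrm{DP}}_\alpha$ (resp. $\mathcal G^{\mathrm{HP}}_\alpha$) user $n$ minimizes $f_n^\alpha=(1-\alpha)b_n-\alpha u_n(\boldsymbol\ell_n)$ over $\mathcal L_n$ with the corresponding bill; Nash equilibria are defined as usual. *)

theory Defs
  imports Complex_Main
begin

text \<open>Users are 1..N. A load profile assigns to each user n a pair
  (peak load, off-peak load). Preferred profiles are given by lhat.\<close>

type_synonym profile = "nat \<Rightarrow> real \<times> real"

definition total_energy :: "nat \<Rightarrow> (nat \<Rightarrow> real) \<Rightarrow> real" where
  "total_energy N E = (\<Sum>n\<in>{1..N}. E n)"

definition loadP :: "nat \<Rightarrow> profile \<Rightarrow> real" where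
  "loadP N l = (\<Sum>n\<in>{1..N}. fst (l n))"

definition loadO :: "nat \<Rightarrow> profile \<Rightarrow> real" where
  "loadO N l = (\<Sum>n\<in>{1..N}. snd (l n))"

definition feasible :: "(nat \<Rightarrow> real) \<Rightarrow> nat \<Rightarrow> real \<times> real \<Rightarrow> bool" where
  "feasible E n x \<longleftrightarrow> fst x + snd x = E n \<and> fst x \<ge> 0 \<and> snd x \<ge> 0"

definition utility :: "profile \<Rightarrow> nat \<Rightarrow> real \<times> real \<Rightarrow> real" where
  "utility lhat n x = - ((fst x - fst (lhat n))\<^sup>2 + (snd x - snd (lhat n))\<^sup>2)"

text \<open>Daily-proportional bill and hourly-proportional bill (C_h(x) = x^2).\<close>
definition bill_DP :: "nat \<Rightarrow> (nat \<Rightarrow> real) \<Rightarrow> profile \<Rightarrow> nat \<Rightarrow> real" where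
  "bill_DP N E l n = E n / total_energy N E * ((loadP N l)\<^sup>2 + (loadO N l)\<^sup>2)"

definition bill_HP :: "nat \<Rightarrow> profile \<Rightarrow> nat \<Rightarrow> real" where
  "bill_HP N l n = fst (l n) * loadP N l + snd (l n) * loadO N l"

definition cost_DP :: "real \<Rightarrow> nat \<Rightarrow> (nat \<Rightarrow> real) \<Rightarrow> profile \<Rightarrow> profile \<Rightarrow> nat \<Rightarrow> real" where
  "cost_DP \<alpha> N E lhat l n = (1 - \<alpha>) * bill_DP N E l n - \<alpha> * utility lhat n (l n)"

definition cost_HP :: "real \<Rightarrow> nat \<Rightarrow> profile \<Rightarrow> profile \<Rightarrow> nat \<Rightarrow> real" where
  "cost_HP \<alpha> N lhat l n = (1 - \<alpha>) * bill_HP N l n - \<alpha> * utility lhat n (l n)"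

definition is_NE :: "(profile \<Rightarrow> nat \<Rightarrow> real) \<Rightarrow> nat \<Rightarrow> (nat \<Rightarrow> real) \<Rightarrow> profile \<Rightarrow> bool" where
  "is_NE cost N E l \<longleftrightarrow>
     (\<forall>n\<in>{1..N}. feasible E n (l n)) \<and>
     (\<forall>n\<in>{1..N}. \<forall>x. feasible E n x \<longrightarrow> cost l n \<le> cost (l(n := x)) n)"

definition phi :: "nat \<Rightarrow> real \<Rightarrow> real" where
  "phi N \<alpha> = 2 * \<alpha> / ((1 + \<alpha>) + (1 - \<alpha>) * real N)"

end

theory Submission
  imports Defs
begin


lemma loadP_upd: assumes "n \<in> {1..N}"
  shows "loadP N (l(n:=p)) = loadP N l - fst (l n) + fst p"
proof -
  have "loadP N (l(n:=p)) = (\<Sum>i\<in>{1..N}. fst (l i) + (if i = n then fst p - fst (l n) else 0))"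
    unfolding loadP_def by (rule sum.cong) auto
  also have "\<dots> = loadP N l + (fst p - fst (l n))"
    unfolding loadP_def sum.distrib using assms by simp
  finally show ?thesis by simp
qed

lemma loadO_upd: assumes "n \<in> {1..N}"
  shows "loadO N (l(n:=p)) = loadO N l - snd (l n) + snd p"
proof -
  have "loadO N (l(n:=p)) = (\<Sum>i\<in>{1..N}. snd (l i) + (if i = n then snd p - snd (l n) else 0))"
    unfolding loadO_def by (rule sum.cong) auto
  also have "\<dots> = loadO N l + (snd p - snd (l n))"
    unfolding loadO_def sum.distrib using assms by simp
  finally show ?thesis by simp
qed

lemma loadO_feas: assumes "\<forall>n\<in>{1..N}. feasible E n (l n)"
  shows "loadO N l = total_energy N E - loadP N l"
proof -
  have "total_energy N E = (\<Sum>i\<in>{1..N}. fst (l i) + snd (l i))"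
    unfolding total_energy_def using assms by (intro sum.cong) (auto simp: feasible_def)
  then show ?thesis unfolding loadO_def loadP_def sum.distrib by simp
qed

lemma fo:
  fixes c :: "real \<Rightarrow> real"
  assumes c: "\<And>d. c d - c 0 = D*d + K*d^2" and K: "K > 0"
    and x: "0 \<le> x" "x \<le> e"
    and opt: "\<And>d. 0 \<le> x+d \<Longrightarrow> x+d \<le> e \<Longrightarrow> c 0 \<le> c d"
  shows "x > 0 \<Longrightarrow> D \<le> 0" and "x < e \<Longrightarrow> D \<ge> 0"
proof -
  assume "x > 0"
  show "D \<le> 0"
  proof (rule ccontr)
    assume "\<not> D \<le> 0"
    define t where "t = min x (D/(2*K))"
    have t0: "t > 0" using \<open>x>0\<close> \<open>\<not> D \<le> 0\<close> K by (auto simp: t_def)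
    have "K*t \<le> D/2" using K by (auto simp: t_def min_def field_simps split: if_splits)
    hence "K*t^2 \<le> D/2*t" using t0 by (simp add: power2_eq_square mult_right_mono algebra_simps)
    hence "c (-t) - c 0 < 0" using c[of "-t"] t0 \<open>\<not> D \<le> 0\<close> by (simp add: power2_eq_square)
    moreover have "t \<le> x" by (simp add: t_def)
    hence "c 0 \<le> c (-t)" using opt[of "-t"] x t0 by simp
    ultimately show False by simp
  qed
next
  assume "x < e"
  show "D \<ge> 0"
  proof (rule ccontr)
    assume "\<not> D \<ge> 0"
    define t where "t = min (e - x) (-D/(2*K))"
    have t0: "t > 0" using \<open>x<e\<close> \<open>\<not> D \<ge> 0\<close> K by (simp add: t_def divide_neg_pos)
    have "K*t \<le> -D/2" using K by (auto simp: t_def min_def field_simps split: if_splits)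
    hence "K*t^2 \<le> -D/2*t" using t0
      by (metis mult.assoc mult.commute mult_right_mono less_imp_le power2_eq_square)
    moreover have "D*t < 0" using t0 \<open>\<not> D \<ge> 0\<close> by (simp add: mult_neg_pos)
    moreover have "-D/2*t = -(D*t)/2" by simp
    ultimately have "c t - c 0 < 0" using c[of "t"] by linarith
    moreover have "t \<le> e - x" by (simp add: t_def)
    hence "c 0 \<le> c t" using opt[of "t"] x t0 by simp
    ultimately show False by simp
  qed
qed
lemma balance:
  fixes x u :: "nat \<Rightarrow> real"
  assumes fin: "finite S"
    and H1: "\<And>n. n \<in> S \<Longrightarrow> x n > u n \<Longrightarrow> P > Ls \<Longrightarrow> False"
    and H2: "\<And>n. n \<in> S \<Longrightarrow> x n < u n \<Longrightarrow> P < Ls \<Longrightarrow> False"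
    and sx: "sum x S = P" and su: "sum u S = Ls"
  shows "P = Ls"
proof (rule ccontr)
  assume ne: "P \<noteq> Ls"
  show False
  proof (cases "P > Ls")
    case True
    hence "\<forall>n\<in>S. x n \<le> u n" using H1 by force
    hence "sum x S \<le> sum u S" by (intro sum_mono) auto
    with True sx su show False by simp
  next
    case False
    hence "P < Ls" using ne by simp
    hence "\<forall>n\<in>S. u n \<le> x n" using H2 by force
    hence "sum u S \<le> sum x S" by (intro sum_mono) auto
    with \<open>P < Ls\<close> sx su show False by simp
  qed
qed

lemma T_pos: assumes "N \<ge> 1" "\<forall>n\<in>{1..N}. E n > 0" shows "total_energy N E > 0"
  unfolding total_energy_def using assms by (intro sum_pos) auto

lemma NE_foc:
  assumes NE: "is_NE cost N E l" and n: "n \<in> {1..N}"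
    and c: "\<And>d. cost (l(n := (fst (l n) + d, snd (l n) - d))) n - cost l n = D*d + K*d^2"
    and K: "K > 0"
  shows "fst (l n) > 0 \<Longrightarrow> D \<le> 0" and "fst (l n) < E n \<Longrightarrow> D \<ge> 0"
proof -
  define cc where "cc d = cost (l(n := (fst (l n) + d, snd (l n) - d))) n" for d
  have l0: "l(n := (fst (l n) + 0, snd (l n) - 0)) = l" by auto
  have feas: "feasible E n (l n)" using NE n by (auto simp: is_NE_def)
  have c': "\<And>d. cc d - cc 0 = D*d + K*d^2" using c l0 by (simp add: cc_def)
  have x: "0 \<le> fst (l n)" "fst (l n) \<le> E n" using feas by (auto simp: feasible_def)
  have opt: "cc 0 \<le> cc d" if "0 \<le> fst (l n) + d" "fst (l n) + d \<le> E n" for d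
  proof -
    have "feasible E n (fst (l n) + d, snd (l n) - d)" using feas that by (auto simp: feasible_def)
    hence "cost l n \<le> cc d" using NE n by (auto simp: is_NE_def cc_def)
    thus ?thesis using l0 by (simp add: cc_def)
  qed
  show "fst (l n) > 0 \<Longrightarrow> D \<le> 0" using fo(1)[OF c' K x opt] by blast
  show "fst (l n) < E n \<Longrightarrow> D \<ge> 0" using fo(2)[OF c' K x opt] by blast
qed

lemma DP_diff:
  assumes n: "n \<in> {1..N}"
  shows "cost_DP \<alpha> N E lhat (l(n := (fst (l n) + d, snd (l n) - d))) n - cost_DP \<alpha> N E lhat l n
    = ((1-\<alpha>)*(E n/total_energy N E)*(2*(loadP N l - loadO N l)) + \<alpha>*(2*(fst (l n) - fst (lhat n)) - 2*(snd (l n) - snd (lhat n))))*d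
      + ((1-\<alpha>)*(E n/total_energy N E)*2 + 2*\<alpha>)*d^2"
  unfolding cost_DP_def bill_DP_def utility_def loadP_upd[OF n] loadO_upd[OF n]
  by (simp add: power2_eq_square algebra_simps add_divide_distrib diff_divide_distrib)

lemma HP_diff:
  assumes n: "n \<in> {1..N}"
  shows "cost_HP \<alpha> N lhat (l(n := (fst (l n) + d, snd (l n) - d))) n - cost_HP \<alpha> N lhat l n
    = ((1-\<alpha>)*(loadP N l + fst (l n) - loadO N l - snd (l n)) + \<alpha>*(2*(fst (l n) - fst (lhat n)) - 2*(snd (l n) - snd (lhat n))))*d
      + 2*d^2"
  unfolding cost_HP_def bill_HP_def utility_def loadP_upd[OF n] loadO_upd[OF n]
  by (simp add: power2_eq_square algebra_simps add_divide_distrib diff_divide_distrib)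


lemma DP_part:
  assumes N: "N \<ge> 1"
    and Epos: "\<forall>n\<in>{1..N}. E n > 0"
    and hat_feas: "\<forall>n\<in>{1..N}. feasible E n (lhat n)"
    and peak: "loadP N lhat \<ge> total_energy N E / 2"
    and cond: "\<forall>n\<in>{1..N}. fst (lhat n) / E n + 1/2 \<ge> loadP N lhat / total_energy N E"
    and a: "0 \<le> \<alpha>" "\<alpha> \<le> 1"
    and NE: "is_NE (cost_DP \<alpha> N E lhat) N E l"
  shows "loadP N l = total_energy N E / 2 + \<alpha> * (loadP N lhat - loadO N lhat) / 2"
proof -
  define T where "T = total_energy N E"
  define P where "P = loadP N l"
  define Dl where "Dl = loadP N lhat - loadO N lhat"
  define Ls where "Ls = T/2 + \<alpha> * Dl / 2"
  have T: "T > 0" using T_pos[OF N Epos] by (simp add: T_def)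
  have lfeas: "\<forall>n\<in>{1..N}. feasible E n (l n)" using NE by (simp add: is_NE_def)
  have O: "loadO N l = T - P" using loadO_feas[OF lfeas] by (simp add: T_def P_def)
  have Oh: "loadO N lhat = T - loadP N lhat" using loadO_feas[OF hat_feas] by (simp add: T_def)
  have Dl0: "Dl \<ge> 0" using peak Oh by (simp add: Dl_def T_def)
  define u where "u n = fst (lhat n) - (1-\<alpha>)*(E n/T)*Dl/2" for n
  have sumE: "(\<Sum>n\<in>{1..N}. E n / T) = 1" using T by (simp add: T_def total_energy_def flip: sum_divide_distrib)
  have su: "sum u {1..N} = Ls"
  proof -
    have "sum u {1..N} = loadP N lhat - (1-\<alpha>)*Dl/2 * (\<Sum>n\<in>{1..N}. E n / T)"
    proof -
      have "(\<Sum>n\<in>{1..N}. (1-\<alpha>)*(E n/T)*Dl/2) = (\<Sum>n\<in>{1..N}. (1-\<alpha>)*Dl/2 * (E n/T))"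
        by (rule sum.cong) (simp_all add: field_simps)
      also have "\<dots> = (1-\<alpha>)*Dl/2 * (\<Sum>n\<in>{1..N}. E n / T)" by (simp add: sum_distrib_left)
      finally show ?thesis unfolding u_def sum_subtractf loadP_def by simp
    qed
    also have "\<dots> = Ls" using sumE Oh by (simp add: Ls_def Dl_def field_simps)
    finally show ?thesis .
  qed
  have sx: "sum (\<lambda>n. fst (l n)) {1..N} = P" by (simp add: P_def loadP_def)
  have foc: "(fst (l n) > 0 \<longrightarrow> (1-\<alpha>)*(E n/T)*(2*(2*P-T)) + 4*\<alpha>*(fst (l n) - fst (lhat n)) \<le> 0)
     \<and> (fst (l n) < E n \<longrightarrow> (1-\<alpha>)*(E n/T)*(2*(2*P-T)) + 4*\<alpha>*(fst (l n) - fst (lhat n)) \<ge> 0)"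
    if n: "n \<in> {1..N}" for n
  proof -
    have En: "E n > 0" using Epos n by auto
    have Kp: "(1-\<alpha>)*(E n/T)*2 + 2*\<alpha> > 0"
    proof (cases "\<alpha> = 1")
      case False
      hence pos: "(1-\<alpha>)*(E n/T) > 0" using a En T by simp
      hence "(1-\<alpha>)*(E n/T)*2 > 0" by (simp only: mult_pos_pos zero_less_numeral)
      thus ?thesis using a by linarith
    qed simp
    have fl: "snd (l n) = E n - fst (l n)" "snd (lhat n) = E n - fst (lhat n)"
      using lfeas hat_feas n by (force simp: feasible_def)+
    have eq: "(1-\<alpha>)*(E n/total_energy N E)*(2*(loadP N l - loadO N l)) + \<alpha>*(2*(fst (l n) - fst (lhat n)) - 2*(snd (l n) - snd (lhat n)))
       = (1-\<alpha>)*(E n/T)*(2*(2*P-T)) + 4*\<alpha>*(fst (l n) - fst (lhat n))"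
    proof -
      have O': "loadO N l = total_energy N E - loadP N l" using O by (simp add: T_def P_def)
      show ?thesis unfolding O' fl T_def P_def by (simp add: algebra_simps)
    qed
    show ?thesis using NE_foc[OF NE n DP_diff[OF n] Kp[unfolded T_def]] eq by (simp add: T_def)
  qed
  have ub: "0 \<le> u n \<and> u n \<le> E n" if n: "n \<in> {1..N}" for n
  proof -
    have En: "E n > 0" using Epos n by auto
    have hf: "0 \<le> fst (lhat n)" "fst (lhat n) \<le> E n" using hat_feas n by (force simp: feasible_def)+
    have t1: "(1-\<alpha>)*(E n/T)*Dl \<ge> 0" using a En T Dl0 by simp
    have c1: "fst (lhat n) / E n + 1/2 \<ge> loadP N lhat / T" using cond n by (simp add: T_def)
    have "loadP N lhat / T = 1/2 + Dl/(2*T)" using Oh T by (simp add: Dl_def field_simps)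
    hence "fst (lhat n) / E n \<ge> Dl/(2*T)" using c1 by simp
    hence "fst (lhat n) \<ge> E n * Dl/(2*T)" using En by (simp add: field_simps)
    moreover have "E n * Dl/(2*T) \<ge> (1-\<alpha>)*(E n/T)*Dl/2"
    proof -
      have "(1-\<alpha>)*(E n*Dl/(2*T)) \<le> 1*(E n*Dl/(2*T))"
        using a En T Dl0 by (intro mult_right_mono) auto
      thus ?thesis by (simp add: field_simps)
    qed
    ultimately show ?thesis using hf t1 by (simp add: u_def)
  qed
  have "P = Ls"
  proof (rule balance[OF _ _ _ sx su])
    fix n assume n: "n \<in> {1..N}" and gt: "fst (l n) > u n" and PL: "P > Ls"
    have "fst (l n) > 0" using ub[OF n] gt by linarith
    hence le: "(1-\<alpha>)*(E n/T)*(2*(2*P-T)) + 4*\<alpha>*(fst (l n) - fst (lhat n)) \<le> 0" using foc[OF n] by blast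
    have zero: "(1-\<alpha>)*(E n/T)*(2*(2*Ls-T)) + 4*\<alpha>*(u n - fst (lhat n)) = 0"
      using T by (simp add: Ls_def u_def field_simps)
    have En: "E n > 0" using Epos n by auto
    have "(1-\<alpha>)*(E n/T)*(4*(P-Ls)) + 4*\<alpha>*(fst (l n) - u n) > 0"
    proof (cases "\<alpha> = 1")
      case True thus ?thesis using gt by simp
    next
      case False
      hence pos: "(1-\<alpha>)*(E n/T) > 0" using a En T by simp
      hence "(1-\<alpha>)*(E n/T)*(4*(P-Ls)) > 0" using PL by (intro mult_pos_pos[OF pos]) simp
      moreover have "4*\<alpha>*(fst (l n) - u n) \<ge> 0" using a gt by simp
      ultimately show ?thesis by linarith
    qed
    with le zero show False by (simp add: algebra_simps)
  next
    fix n assume n: "n \<in> {1..N}" and gt: "fst (l n) < u n" and PL: "P < Ls"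
    have "fst (l n) < E n" using ub[OF n] gt by linarith
    hence le: "(1-\<alpha>)*(E n/T)*(2*(2*P-T)) + 4*\<alpha>*(fst (l n) - fst (lhat n)) \<ge> 0" using foc[OF n] by blast
    have zero: "(1-\<alpha>)*(E n/T)*(2*(2*Ls-T)) + 4*\<alpha>*(u n - fst (lhat n)) = 0"
      using T by (simp add: Ls_def u_def field_simps)
    have En: "E n > 0" using Epos n by auto
    have "(1-\<alpha>)*(E n/T)*(4*(Ls-P)) + 4*\<alpha>*(u n - fst (l n)) > 0"
    proof (cases "\<alpha> = 1")
      case True thus ?thesis using gt by simp
    next
      case False
      hence pos: "(1-\<alpha>)*(E n/T) > 0" using a En T by simp
      hence "(1-\<alpha>)*(E n/T)*(4*(Ls-P)) > 0" using PL by (intro mult_pos_pos[OF pos]) simp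
      moreover have "4*\<alpha>*(u n - fst (l n)) \<ge> 0" using a gt by simp
      ultimately show ?thesis by linarith
    qed
    with le zero show False by (simp add: algebra_simps)
  qed simp
  thus ?thesis by (simp add: P_def Ls_def T_def Dl_def)
qed


lemma HP_part:
  assumes N: "N \<ge> 1"
    and Epos: "\<forall>n\<in>{1..N}. E n > 0"
    and hat_feas: "\<forall>n\<in>{1..N}. feasible E n (lhat n)"
    and peak: "loadP N lhat \<ge> total_energy N E / 2"
    and cond: "\<forall>n\<in>{1..N}. 2 * (real N - 1) * fst (lhat n) \<ge> (loadP N lhat - loadO N lhat) - E n"
    and a: "0 \<le> \<alpha>" "\<alpha> \<le> 1"
    and NE: "is_NE (cost_HP \<alpha> N lhat) N E l"
  shows "loadP N l = total_energy N E / 2 + phi N \<alpha> * (loadP N lhat - loadO N lhat) / 2"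
proof -
  define T where "T = total_energy N E"
  define P where "P = loadP N l"
  define Dl where "Dl = loadP N lhat - loadO N lhat"
  define ph where "ph = phi N \<alpha>"
  define den where "den = (1 + \<alpha>) + (1 - \<alpha>) * real N"
  define Ls where "Ls = T/2 + ph * Dl / 2"
  have T: "T > 0" using T_pos[OF N Epos] by (simp add: T_def)
  have Nr: "real N \<ge> 1" using N by simp
  have den2: "den \<ge> 2"
  proof -
    have "(1-\<alpha>)*1 \<le> (1-\<alpha>)*real N" using a Nr by (intro mult_left_mono) auto
    hence "1-\<alpha> \<le> (1-\<alpha>)*real N" by simp
    thus ?thesis unfolding den_def by linarith
  qed
  have key: "ph * den = 2*\<alpha>" using den2 by (simp add: ph_def phi_def den_def)
  have ph0: "ph \<ge> 0" using den2 a by (simp add: ph_def phi_def den_def)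
  have lfeas: "\<forall>n\<in>{1..N}. feasible E n (l n)" using NE by (simp add: is_NE_def)
  have O: "loadO N l = T - P" using loadO_feas[OF lfeas] by (simp add: T_def P_def)
  have Oh: "loadO N lhat = T - loadP N lhat" using loadO_feas[OF hat_feas] by (simp add: T_def)
  have Dl0: "Dl \<ge> 0" using peak Oh by (simp add: Dl_def T_def)
  have hP: "loadP N lhat = (T + Dl)/2" using Oh by (simp add: Dl_def)
  have a2: "2 + 2*\<alpha> > 0" using a by simp
  define u where "u n = (4*\<alpha>*fst (lhat n) - (1-\<alpha>)*(ph*Dl - E n))/(2+2*\<alpha>)" for n
  have su: "sum u {1..N} = Ls"
  proof -
    have "(2+2*\<alpha>) * sum u {1..N} = (\<Sum>n\<in>{1..N}. (2+2*\<alpha>) * u n)" by (simp add: sum_distrib_left)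
    also have "\<dots> = (\<Sum>n\<in>{1..N}. 4*\<alpha>*fst (lhat n) + (1-\<alpha>)*E n - (1-\<alpha>)*ph*Dl)"
    proof (rule sum.cong)
      fix n
      have "(2+2*\<alpha>) * u n = 4*\<alpha>*fst (lhat n) - (1-\<alpha>)*(ph*Dl - E n)"
        unfolding u_def using a2 by simp
      thus "(2+2*\<alpha>) * u n = 4*\<alpha>*fst (lhat n) + (1-\<alpha>)*E n - (1-\<alpha>)*ph*Dl"
        by (simp add: algebra_simps)
    qed simp
    also have "\<dots> = 4*\<alpha>*loadP N lhat + (1-\<alpha>)*T - real N*((1-\<alpha>)*ph*Dl)"
      by (simp add: sum_subtractf sum.distrib loadP_def T_def total_energy_def sum_distrib_left)
    also have "\<dots> = (2+2*\<alpha>) * Ls"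
    proof -
      have h: "ph*Dl*den = 2*\<alpha>*Dl" using key by (simp add: algebra_simps)
      have "4*\<alpha>*((T + Dl)/2) + (1-\<alpha>)*T - real N*((1-\<alpha>)*ph*Dl) - (2+2*\<alpha>)*(T/2 + ph*Dl/2)
           = 2*\<alpha>*Dl - ph*Dl*den"
        unfolding den_def by (simp add: algebra_simps add_divide_distrib)
      thus ?thesis unfolding hP Ls_def using h by simp
    qed
    finally show ?thesis using a2 by simp
  qed
  have sx: "sum (\<lambda>n. fst (l n)) {1..N} = P" by (simp add: P_def loadP_def)
  have foc: "(fst (l n) > 0 \<longrightarrow> (1-\<alpha>)*(2*P - T + 2*fst (l n) - E n) + 4*\<alpha>*(fst (l n) - fst (lhat n)) \<le> 0)
     \<and> (fst (l n) < E n \<longrightarrow> (1-\<alpha>)*(2*P - T + 2*fst (l n) - E n) + 4*\<alpha>*(fst (l n) - fst (lhat n)) \<ge> 0)"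
    if n: "n \<in> {1..N}" for n
  proof -
    have fl: "snd (l n) = E n - fst (l n)" "snd (lhat n) = E n - fst (lhat n)"
      using lfeas hat_feas n by (force simp: feasible_def)+
    have eq: "(1-\<alpha>)*(loadP N l + fst (l n) - loadO N l - snd (l n)) + \<alpha>*(2*(fst (l n) - fst (lhat n)) - 2*(snd (l n) - snd (lhat n)))
       = (1-\<alpha>)*(2*P - T + 2*fst (l n) - E n) + 4*\<alpha>*(fst (l n) - fst (lhat n))"
    proof -
      have O': "loadO N l = total_energy N E - loadP N l" using O by (simp add: T_def P_def)
      show ?thesis unfolding O' fl T_def P_def by (simp add: algebra_simps)
    qed
    have K: "(2::real) > 0" by simp
    show ?thesis using NE_foc[OF NE n HP_diff[OF n] K] eq by simp
  qed
  have ub: "0 \<le> u n \<and> u n \<le> E n" if n: "n \<in> {1..N}" for n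
  proof -
    have En: "E n > 0" using Epos n by auto
    have hf: "0 \<le> fst (lhat n)" "fst (lhat n) \<le> E n" using hat_feas n by (force simp: feasible_def)+
    have t1: "(1-\<alpha>)*(ph*Dl) \<ge> 0" using a ph0 Dl0 by simp
    have c1: "Dl \<le> 2*(real N - 1)*fst (lhat n) + E n" proof -
      have "2 * (real N - 1) * fst (lhat n) \<ge> (loadP N lhat - loadO N lhat) - E n" using cond n by blast
      thus ?thesis by (simp add: Dl_def)
    qed
    have up: "4*\<alpha>*fst (lhat n) - (1-\<alpha>)*(ph*Dl - E n) \<le> (2+2*\<alpha>)*E n"
    proof -
      have "\<alpha>*fst (lhat n) \<le> \<alpha>*E n" using a hf by (simp add: mult_left_mono)
      moreover have "(1-\<alpha>)*E n \<le> (2-2*\<alpha>)*E n" using a En by simp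
      ultimately show ?thesis using t1 by (simp add: algebra_simps)
    qed
    have lo: "4*\<alpha>*fst (lhat n) - (1-\<alpha>)*(ph*Dl - E n) \<ge> 0"
    proof -
      define m where "m = real N - 1"
      have m0: "m \<ge> 0" using Nr by (simp add: m_def)
      have dm: "den = 2 + (1-\<alpha>)*m" by (simp add: den_def m_def algebra_simps)
      have A: "(1-\<alpha>)*(2*\<alpha>*Dl) \<le> (1-\<alpha>)*(2*\<alpha>*(2*m*fst (lhat n) + E n))"
        using c1 a by (intro mult_left_mono) (auto simp: m_def)
      have B: "den*(4*\<alpha>*fst (lhat n)) \<ge> (1-\<alpha>)*m*(4*\<alpha>*fst (lhat n))"
        unfolding dm using a hf by (intro mult_right_mono) auto
      have C: "den*((1-\<alpha>)*E n) \<ge> 2*\<alpha>*((1-\<alpha>)*E n)"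
        using den2 a En by (intro mult_right_mono) auto
      have "den*((1-\<alpha>)*(ph*Dl)) = (1-\<alpha>)*(2*\<alpha>*Dl)" using key by (simp add: algebra_simps)
      hence "den*((1-\<alpha>)*(ph*Dl)) \<le> den*(4*\<alpha>*fst (lhat n) + (1-\<alpha>)*E n)"
        using A B C by (simp add: algebra_simps)
      hence "(1-\<alpha>)*(ph*Dl) \<le> 4*\<alpha>*fst (lhat n) + (1-\<alpha>)*E n" using den2
        by (simp add: mult_le_cancel_left_pos)
      thus ?thesis by (simp add: algebra_simps)
    qed
    show ?thesis using up lo a2 by (simp add: u_def field_simps)
  qed
  have zero: "(1-\<alpha>)*(2*Ls - T + 2*u n - E n) + 4*\<alpha>*(u n - fst (lhat n)) = 0" for n
  proof -
    have "(2+2*\<alpha>)*u n = 4*\<alpha>*fst (lhat n) - (1-\<alpha>)*(ph*Dl - E n)" using a2 by (simp add: u_def)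
    thus ?thesis by (simp add: Ls_def algebra_simps)
  qed
  have "P = Ls"
  proof (rule balance[OF _ _ _ sx su])
    fix n assume n: "n \<in> {1..N}" and gt: "fst (l n) > u n" and PL: "P > Ls"
    have "fst (l n) > 0" using ub[OF n] gt by linarith
    hence le: "(1-\<alpha>)*(2*P - T + 2*fst (l n) - E n) + 4*\<alpha>*(fst (l n) - fst (lhat n)) \<le> 0" using foc[OF n] by blast
    have "(1-\<alpha>)*(2*(P-Ls)) \<ge> 0" using a PL by simp
    moreover have "(2+2*\<alpha>)*(fst (l n) - u n) > 0" using a2 gt by simp
    ultimately show False using le zero[of n] by (simp add: algebra_simps)
  next
    fix n assume n: "n \<in> {1..N}" and gt: "fst (l n) < u n" and PL: "P < Ls"
    have "fst (l n) < E n" using ub[OF n] gt by linarith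
    hence le: "(1-\<alpha>)*(2*P - T + 2*fst (l n) - E n) + 4*\<alpha>*(fst (l n) - fst (lhat n)) \<ge> 0" using foc[OF n] by blast
    have "(1-\<alpha>)*(2*(Ls-P)) \<ge> 0" using a PL by simp
    moreover have "(2+2*\<alpha>)*(u n - fst (l n)) > 0" using a2 gt by simp
    ultimately show False using le zero[of n] by (simp add: algebra_simps)
  qed simp
  thus ?thesis by (simp add: P_def Ls_def T_def Dl_def ph_def)
qed


theorem corollary3:
  fixes N :: nat and E :: "nat \<Rightarrow> real" and lhat :: profile
  assumes N: "N \<ge> 1"
    and Epos: "\<forall>n\<in>{1..N}. E n > 0"
    and hat_feas: "\<forall>n\<in>{1..N}. feasible E n (lhat n)"
    and peak: "loadP N lhat \<ge> total_energy N E / 2"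
    and offpeak: "total_energy N E / 2 \<ge> loadO N lhat"
  shows
    "((\<forall>n\<in>{1..N}. fst (lhat n) / E n + 1/2 \<ge> loadP N lhat / total_energy N E) \<longrightarrow>
       (\<forall>\<alpha>\<in>{0..1}. \<forall>l. is_NE (cost_DP \<alpha> N E lhat) N E l \<longrightarrow>
          loadP N l = total_energy N E / 2 + \<alpha> * (loadP N lhat - loadO N lhat) / 2))
     \<and>
     ((\<forall>n\<in>{1..N}. 2 * (real N - 1) * fst (lhat n) \<ge> (loadP N lhat - loadO N lhat) - E n) \<longrightarrow>
       (\<forall>\<alpha>\<in>{0..1}. \<forall>l. is_NE (cost_HP \<alpha> N lhat) N E l \<longrightarrow>
          loadP N l = total_energy N E / 2 + phi N \<alpha> * (loadP N lhat - loadO N lhat) / 2))"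
  proof (intro conjI impI ballI allI)
  fix \<alpha> :: real and l assume c: "\<forall>n\<in>{1..N}. fst (lhat n) / E n + 1/2 \<ge> loadP N lhat / total_energy N E"
    and a: "\<alpha> \<in> {0..1}" and ne: "is_NE (cost_DP \<alpha> N E lhat) N E l"
  show "loadP N l = total_energy N E / 2 + \<alpha> * (loadP N lhat - loadO N lhat) / 2"
    using DP_part[OF N Epos hat_feas peak c _ _ ne] a by simp
next
  fix \<alpha> :: real and l assume c: "\<forall>n\<in>{1..N}. 2 * (real N - 1) * fst (lhat n) \<ge> (loadP N lhat - loadO N lhat) - E n"
    and a: "\<alpha> \<in> {0..1}" and ne: "is_NE (cost_HP \<alpha> N lhat) N E l"
  show "loadP N l = total_energy N E / 2 + phi N \<alpha> * (loadP N lhat - loadO N lhat) / 2"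
    using HP_part[OF N Epos hat_feas peak c _ _ ne] a by simp
qed

end
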